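(* Let $k\ge 3$, constants $c_1\ge\dots\ge c_k>0$ with $\sum c_i=1$, and for $n$ with all $c_in$ integers let $G_n$ be the complete $k$-partite graph with parts $V_1,\dots,V_k$, $|V_i|=c_in$. Let $w_0$ be a uniformly random initial weighting. If $c_i>\tfrac12$, then $$\mathbb{E}(m_i)\le 2c_in-n+\frac{2(1-c_i)}{2c_i-1}.$$
   Context: An initial weighting of a graph on vertex set $V$, $|V|=n$, is a bijection $w_0:V\to\{-n,\dots,-1\}$; here $w_0$ is uniform among all $n!$ such bijections. The quantity $m_i$ is defined by $$m_i=\max\Big\{x\ge 0:\ \exists\, y\ge 0 \text{ with } 2y+x\le n \text{ and } \Big|\bigcup_{j=1}^{2y+x}w_0^{-1}(-j)\cap V_i\Big|=y+x\Big\},$$ equivalently $m_i=\max_{0\le t\le n}X(t)$ where $X(t)=|\{v\in V_i: w_0(v)\ge -t\}|-|\{v\in V\setminus V_i: w_0(v)\ge -t\}|$. A complete $k$-partite graph with parts $V_1,\dots,V_k$ has an edge between $u$ and $v$ iff they lie in different parts. *)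

theory Defs
  imports Complex_Main
begin

text \<open>Initial weightings: bijections V -> {-n,...,-1} (n = card V), extended by 0 outside V
  so that the set of weightings is finite and in bijection with the n! bijections.\<close>
definition weightings :: "'a set \<Rightarrow> ('a \<Rightarrow> int) set" where
  "weightings V = {w. bij_betw w V {- int (card V) .. -1} \<and> (\<forall>v. v \<notin> V \<longrightarrow> w v = 0)}"

definition Xwalk :: "'a set \<Rightarrow> 'a set \<Rightarrow> ('a \<Rightarrow> int) \<Rightarrow> nat \<Rightarrow> int" where
  "Xwalk V Vi w t = int (card {v \<in> Vi. w v \<ge> - int t}) - int (card {v \<in> V - Vi. w v \<ge> - int t})"

definition m_part :: "'a set \<Rightarrow> 'a set \<Rightarrow> ('a \<Rightarrow> int) \<Rightarrow> int" where
  "m_part V Vi w = Max ((\<lambda>t. Xwalk V Vi w t) ` {0 .. card V})"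

definition expected_m :: "'a set \<Rightarrow> 'a set \<Rightarrow> real" where
  "expected_m V Vi = (\<Sum>w\<in>weightings V. real_of_int (m_part V Vi w)) / real (card (weightings V))"

definition complete_multipartite_edge :: "nat \<Rightarrow> (nat \<Rightarrow> 'a set) \<Rightarrow> 'a \<Rightarrow> 'a \<Rightarrow> bool" where
  "complete_multipartite_edge k P u v \<longleftrightarrow>
     (\<exists>i\<in>{1..k}. \<exists>j\<in>{1..k}. i \<noteq> j \<and> u \<in> P i \<and> v \<in> P j)"

end

theory Submission
  imports Defs "HOL-Combinatorics.Multiset_Permutations"
begin


function g :: "nat \<Rightarrow> nat \<Rightarrow> int \<Rightarrow> nat" where
  "g a b h = (if h \<le> 0 then (a+b) choose a else if a + b = 0 then 0 else
      (if a > 0 then g (a-1) b (h-1) else 0) + (if b > 0 then g a (b-1) (h+1) else 0))"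
  by auto
termination by (relation "measure (\<lambda>(a,b,h). a+b)") auto

declare g.simps[simp del]

lemma g_closed:
  "g a b h = (if h \<le> max 0 (int a - int b) then (a+b) choose a else (a+b) choose nat (int b + h))"
proof (induction "a+b" arbitrary: a b h rule: less_induct)
  case less
  show ?case
  proof (cases "h \<le> 0")
    case True then show ?thesis by (simp add: g.simps le_max_iff_disj)
  next
    case hpos: False
    show ?thesis
    proof (cases "a + b = 0")
      case True then show ?thesis using hpos by (simp add: g.simps)
    next
      case nz: False
      have ga: "a > 0 \<Longrightarrow> g (a-1) b (h-1) = (if h-1 \<le> max 0 (int (a-1) - int b) then (a-1+b) choose (a-1) else (a-1+b) choose nat (int b + (h-1)))"
        using less[of "a-1" b] nz by auto
      have gb: "b > 0 \<Longrightarrow> g a (b-1) (h+1) = (if h+1 \<le> max 0 (int a - int (b-1)) then (a+(b-1)) choose a else (a+(b-1)) choose nat (int (b-1) + (h+1)))"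
        using less[of a "b-1"] nz by auto
      have eq: "g a b h = (if a > 0 then g (a-1) b (h-1) else 0) + (if b > 0 then g a (b-1) (h+1) else 0)"
        using hpos nz by (simp add: g.simps)
      show ?thesis
      proof (cases "h \<le> int a - int b")
        case hle: True
        then have apos: "a > 0" using hpos by linarith
        show ?thesis
        proof (cases "b = 0")
          case True
          then show ?thesis using eq ga apos hle by simp
        next
          case False
          then have "g a b h = ((a-1+b) choose (a-1)) + ((a+(b-1)) choose a)"
            using eq ga gb apos hle by auto
          also have "\<dots> = (a+b) choose a"
          proof -
            obtain a' where a': "a = Suc a'" using apos by (metis gr0_implies_Suc)
            obtain b' where b': "b = Suc b'" using False by (metis not0_implies_Suc)
            show ?thesis using a' b' by simp
          qed
          finally show ?thesis using hle hpos by simp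
        qed
      next
        case hgt: False
        have rhs: "(if h \<le> max 0 (int a - int b) then (a+b) choose a else (a+b) choose nat (int b + h)) = (a+b) choose nat (int b + h)"
          using hgt hpos by auto
        show ?thesis
        proof (cases "a = 0")
          case a0: True
          then have b0: "b > 0" using nz by simp
          have "g a b h = (b-1) choose nat (int (b-1) + (h+1))" using eq gb a0 b0 hgt hpos by auto
          also have "\<dots> = 0" using hpos b0 by (intro binomial_eq_0) linarith
          also have "\<dots> = (a+b) choose nat (int b + h)" using a0 hpos by (intro binomial_eq_0[symmetric]) linarith
          finally show ?thesis using rhs by simp
        next
          case apos: False
          show ?thesis
          proof (cases "b = 0")
            case b0: True
            have "g a b h = (if h-1 \<le> max 0 (int (a-1) - int b) then (a-1+b) choose (a-1) else (a-1+b) choose nat (int b + (h-1)))"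
              using eq ga apos b0 by simp
            also have "\<dots> = 0"
            proof (cases "h = 1")
              case True then show ?thesis using hgt b0 apos by simp
            next
              case False then show ?thesis using hgt b0 apos hpos by (auto intro!: binomial_eq_0)
            qed
            also have "\<dots> = (a+b) choose nat (int b + h)" using b0 hgt by (intro binomial_eq_0[symmetric]) linarith
            finally show ?thesis using rhs by simp
          next
            case bpos: False
            have g2: "g a (b-1) (h+1) = (a+b-1) choose nat (int b + h)"
              using gb bpos hgt hpos by auto
            have g1: "g (a-1) b (h-1) = (a+b-1) choose nat (int b + h - 1)"
            proof (cases "h = 1")
              case True
              then have "a \<le> b" using hgt by linarith
              then have "(a-1+b) choose (a-1) = (a+b-1) choose b"
                using apos binomial_symmetric[of "a-1" "a-1+b"] by simp
              then show ?thesis using ga apos True by simp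
            next
              case False then show ?thesis using ga apos hgt hpos
                by (auto simp: algebra_simps)
            qed
            have "g a b h = ((a+b-1) choose nat (int b + h - 1)) + ((a+b-1) choose nat (int b + h))"
              using eq g1 g2 apos bpos by simp
            also have "\<dots> = (a+b) choose nat (int b + h)"
            proof -
              obtain m where m: "nat (int b + h) = Suc m" using hpos bpos by (intro that[of "nat (int b + h) - 1"]) linarith
              then have m2: "nat (int b + h - 1) = m" by linarith
              obtain p where p: "a + b = Suc p" using nz by (metis not0_implies_Suc)
              show ?thesis using m m2 p by simp
            qed
            finally show ?thesis using rhs by simp
          qed
        qed
      qed
    qed
  qed
qed



fun mx :: "('a \<Rightarrow> bool) \<Rightarrow> 'a list \<Rightarrow> int" where
  "mx S [] = 0"
| "mx S (x#xs) = max 0 ((if S x then 1 else -1) + mx S xs)"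

lemma mx_nonneg: "mx S xs \<ge> 0"
  by (cases xs) auto

lemma card_filter_cons:
  assumes "finite U" "U \<noteq> {}"
  shows "card {xs \<in> permutations_of_set U. P xs} =
         (\<Sum>x\<in>U. card {ys \<in> permutations_of_set (U - {x}). P (x#ys)})"
proof -
  have "{xs \<in> permutations_of_set U. P xs} =
        (\<Union>x\<in>U. (\<lambda>ys. x # ys) ` {ys \<in> permutations_of_set (U - {x}). P (x#ys)})"
    by (subst permutations_of_set_nonempty[OF assms(2)]) auto
  also have "card \<dots> = (\<Sum>x\<in>U. card ((\<lambda>ys. x # ys) ` {ys \<in> permutations_of_set (U - {x}). P (x#ys)}))"
    by (rule card_UN_disjoint) (use assms in auto)
  also have "\<dots> = (\<Sum>x\<in>U. card {ys \<in> permutations_of_set (U - {x}). P (x#ys)})"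
    by (intro sum.cong refl card_image) (auto simp: inj_on_def)
  finally show ?thesis .
qed

lemma arith_helper:
  fixes a b fa fb fa1 fb1 x y :: nat
  assumes "a * fa1 = (if a > 0 then fa else 0)" "b * fb1 = (if b > 0 then fb else 0)"
  shows "a * (fa1 * fb * x) + b * (fa * fb1 * y) =
         fa * fb * ((if a > 0 then x else 0) + (if b > 0 then y else 0))"
proof (cases "a > 0"; cases "b > 0")
  assume "a > 0" "b > 0"
  then have "fa = a * fa1" "fb = b * fb1" using assms by simp_all
  then show ?thesis using \<open>a > 0\<close> \<open>b > 0\<close> by (simp add: algebra_simps)
next
  assume "a > 0" "\<not> b > 0"
  then have "fa = a * fa1" "b = 0" using assms by simp_all
  then show ?thesis using \<open>a > 0\<close> by (simp add: algebra_simps)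
next
  assume "\<not> a > 0" "b > 0"
  then have "a = 0" "fb = b * fb1" using assms by simp_all
  then show ?thesis using \<open>b > 0\<close> by (simp add: algebra_simps)
next
  assume "\<not> a > 0" "\<not> b > 0"
  then show ?thesis by simp
qed

lemma count_mx:
  assumes "finite A" "finite B" "\<forall>x\<in>A. S x" "\<forall>x\<in>B. \<not> S x"
  shows "card {xs \<in> permutations_of_set (A \<union> B). h \<le> mx S xs}
         = fact (card A) * fact (card B) * g (card A) (card B) h"
  using assms
proof (induction "card A + card B" arbitrary: A B h rule: less_induct)
  case less
  have disj: "A \<inter> B = {}" using less.prems by auto
  have cU: "card (A \<union> B) = card A + card B" using less.prems disj by (simp add: card_Un_disjoint)
  show ?case
  proof (cases "h \<le> 0")
    case True
    then have "{xs \<in> permutations_of_set (A \<union> B). h \<le> mx S xs} = permutations_of_set (A \<union> B)"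
      using mx_nonneg[of S] by (auto intro: order_trans)
    then have "card {xs \<in> permutations_of_set (A \<union> B). h \<le> mx S xs} = fact (card A + card B)"
      using less.prems cU by simp
    also have "\<dots> = fact (card A) * fact (card B) * ((card A + card B) choose card A)"
      using binomial_fact_lemma[of "card A" "card A + card B"] by (simp add: algebra_simps)
    finally show ?thesis using True by (simp add: g.simps)
  next
    case hpos: False
    show ?thesis
    proof (cases "A \<union> B = {}")
      case True
      then have "A = {}" "B = {}" by auto
      then show ?thesis using hpos by (simp add: g.simps)
    next
      case ne: False
      let ?U = "A \<union> B"
      have fin: "finite ?U" using less.prems by simp
      have split: "card {xs \<in> permutations_of_set ?U. h \<le> mx S xs} =
         (\<Sum>x\<in>A. card {ys \<in> permutations_of_set (?U - {x}). h \<le> mx S (x#ys)}) +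
         (\<Sum>x\<in>B. card {ys \<in> permutations_of_set (?U - {x}). h \<le> mx S (x#ys)})"
        unfolding card_filter_cons[OF fin ne] using less.prems disj by (simp add: sum.union_disjoint)
      have sA: "(\<Sum>x\<in>A. card {ys \<in> permutations_of_set (?U - {x}). h \<le> mx S (x#ys)})
          = card A * (fact (card A - 1) * fact (card B) * g (card A - 1) (card B) (h-1))"
      proof -
        have "card {ys \<in> permutations_of_set (?U - {x}). h \<le> mx S (x#ys)} =
              fact (card A - 1) * fact (card B) * g (card A - 1) (card B) (h-1)" if x: "x \<in> A" for x
        proof -
          have U: "?U - {x} = (A - {x}) \<union> B" using x disj by auto
          have cA: "card (A - {x}) = card A - 1" using x less.prems by simp
          have lt: "card (A - {x}) + card B < card A + card B"
            using x less.prems by (metis add_less_cancel_right card_Diff1_less)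
          have cond: "{ys \<in> permutations_of_set (?U - {x}). h \<le> mx S (x#ys)}
               = {ys \<in> permutations_of_set ((A - {x}) \<union> B). h - 1 \<le> mx S ys}"
            using x less.prems hpos U by auto
          show ?thesis unfolding cond
            using less.hyps[OF lt, of "h-1"] less.prems cA by auto
        qed
        then show ?thesis by simp
      qed
      have sB: "(\<Sum>x\<in>B. card {ys \<in> permutations_of_set (?U - {x}). h \<le> mx S (x#ys)})
          = card B * (fact (card A) * fact (card B - 1) * g (card A) (card B - 1) (h+1))"
      proof -
        have "card {ys \<in> permutations_of_set (?U - {x}). h \<le> mx S (x#ys)} =
              fact (card A) * fact (card B - 1) * g (card A) (card B - 1) (h+1)" if x: "x \<in> B" for x
        proof -
          have U: "?U - {x} = A \<union> (B - {x})" using x disj by auto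
          have cB: "card (B - {x}) = card B - 1" using x less.prems by simp
          have lt: "card A + card (B - {x}) < card A + card B"
            using x less.prems by (metis add_less_cancel_left card_Diff1_less)
          have cond: "{ys \<in> permutations_of_set (?U - {x}). h \<le> mx S (x#ys)}
               = {ys \<in> permutations_of_set (A \<union> (B - {x})). h + 1 \<le> mx S ys}"
            using x less.prems hpos U by auto
          show ?thesis unfolding cond
            using less.hyps[OF lt, of "h+1"] less.prems cB by auto
        qed
        then show ?thesis by simp
      qed
      have fa: "card A * fact (card A - 1) = (if card A > 0 then fact (card A) else 0)"
        by (cases "card A") auto
      have fb: "card B * fact (card B - 1) = (if card B > 0 then fact (card B) else 0)"
        by (cases "card B") auto
      have gq: "g (card A) (card B) h = (if card A > 0 then g (card A - 1) (card B) (h-1) else 0) +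
           (if card B > 0 then g (card A) (card B - 1) (h+1) else 0)"
        using hpos ne less.prems by (subst g.simps) auto
      show ?thesis unfolding split sA sB gq
        by (rule arith_helper[OF fa fb])
    qed
  qed
qed



fun wt :: "'a list \<Rightarrow> 'a \<Rightarrow> int" where
  "wt [] v = 0"
| "wt (x#xs) v = (if v = x then -1 else if v \<in> set xs then wt xs v - 1 else 0)"

lemma wt_notin: "v \<notin> set xs \<Longrightarrow> wt xs v = 0"
  by (induction xs) auto

lemma wt_nth: "distinct xs \<Longrightarrow> k < length xs \<Longrightarrow> wt xs (xs ! k) = - (int k + 1)"
proof (induction xs arbitrary: k)
  case Nil then show ?case by simp
next
  case (Cons x xs)
  show ?case
  proof (cases k)
    case 0 then show ?thesis by simp
  next
    case (Suc k')
    then have "xs ! k' \<in> set xs" "xs ! k' \<noteq> x" using Cons.prems by auto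
    then show ?thesis using Cons Suc by simp
  qed
qed

lemma wt_le: "v \<in> set xs \<Longrightarrow> wt xs v \<le> -1"
  by (induction xs) auto

lemma wt_take: "distinct xs \<Longrightarrow>
  {v. v \<in> set xs \<and> P v \<and> wt xs v \<ge> - int t} = {v \<in> set (take t xs). P v}"
proof (induction xs arbitrary: t)
  case Nil then show ?case by simp
next
  case (Cons x xs)
  show ?case
  proof (cases t)
    case 0 then show ?thesis using wt_le[of _ "x#xs"] by force
  next
    case (Suc t')
    have IH: "{v. v \<in> set xs \<and> P v \<and> wt xs v \<ge> - int t'} = {v \<in> set (take t' xs). P v}"
      using Cons by simp
    have "v \<in> set xs \<and> P v \<and> wt (x#xs) v \<ge> - int t \<longleftrightarrow> v \<in> set xs \<and> P v \<and> wt xs v \<ge> - int t'" if "v \<noteq> x" for v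
      using that Suc by auto
    then show ?thesis using IH Suc Cons.prems
      by (auto simp: set_eq_iff)
  qed
qed

definition sg :: "('a \<Rightarrow> bool) \<Rightarrow> 'a \<Rightarrow> int" where "sg S v = (if S v then 1 else -1)"

lemma psum_card: "distinct ys \<Longrightarrow>
  sum_list (map (sg S) ys) = int (card {v \<in> set ys. S v}) - int (card {v \<in> set ys. \<not> S v})"
proof (induction ys)
  case Nil then show ?case by simp
next
  case (Cons y ys)
  have fin: "finite {v \<in> set ys. S v}" "finite {v \<in> set ys. \<not> S v}" by auto
  have e1: "{v \<in> set (y#ys). S v} = (if S y then insert y {v \<in> set ys. S v} else {v \<in> set ys. S v})" by auto
  have e2: "{v \<in> set (y#ys). \<not> S v} = (if S y then {v \<in> set ys. \<not> S v} else insert y {v \<in> set ys. \<not> S v})" by auto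
  show ?case using Cons fin unfolding e1 e2 by (auto simp: sg_def)
qed

lemma mx_Max: "mx S xs = Max ((\<lambda>t. sum_list (map (sg S) (take t xs))) ` {0..length xs})"
proof (induction xs)
  case Nil then show ?case by simp
next
  case (Cons x xs)
  have set: "{0..length (x#xs)} = insert 0 (Suc ` {0..length xs})"
    by (auto simp: image_iff)
  have "(\<lambda>t. sum_list (map (sg S) (take t (x#xs)))) ` {0..length (x#xs)} =
        insert 0 ((\<lambda>t. sum_list (map (sg S) (take t xs)) + sg S x) ` {0..length xs})"
    unfolding set image_insert image_image
    by (rule arg_cong2[where f=insert], simp, rule image_cong) (simp_all add: add.commute)
  then have "Max ((\<lambda>t. sum_list (map (sg S) (take t (x#xs)))) ` {0..length (x#xs)}) =
     max 0 (Max ((\<lambda>t. sum_list (map (sg S) (take t xs))) ` {0..length xs}) + sg S x)"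
    by (simp add: Max_add_commute)
  moreover have "mx S (x#xs) = max 0 (sg S x + mx S xs)" by (simp add: sg_def)
  ultimately show ?case using Cons.IH by (metis add.commute)
qed

lemma m_part_wt:
  assumes "xs \<in> permutations_of_set V" "Vi \<subseteq> V"
  shows "m_part V Vi (wt xs) = mx (\<lambda>v. v \<in> Vi) xs"
proof -
  have d: "distinct xs" and s: "set xs = V" using assms permutations_of_setD by auto
  have cV: "card V = length xs" using d s distinct_card by blast
  have X: "Xwalk V Vi (wt xs) t = sum_list (map (sg (\<lambda>v. v \<in> Vi)) (take t xs))" for t
  proof -
    have "{v \<in> Vi. wt xs v \<ge> - int t} = {v. v \<in> set xs \<and> v \<in> Vi \<and> wt xs v \<ge> - int t}"
      using assms s by auto
    also have "\<dots> = {v \<in> set (take t xs). v \<in> Vi}" by (rule wt_take[OF d])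
    finally have 1: "{v \<in> Vi. wt xs v \<ge> - int t} = {v \<in> set (take t xs). v \<in> Vi}" .
    have "{v \<in> V - Vi. wt xs v \<ge> - int t} = {v. v \<in> set xs \<and> v \<notin> Vi \<and> wt xs v \<ge> - int t}"
      using assms s by auto
    also have "\<dots> = {v \<in> set (take t xs). v \<notin> Vi}" by (rule wt_take[OF d])
    finally have 2: "{v \<in> V - Vi. wt xs v \<ge> - int t} = {v \<in> set (take t xs). v \<notin> Vi}" .
    show ?thesis unfolding Xwalk_def 1 2 using psum_card[of "take t xs" "\<lambda>v. v \<in> Vi"] d by simp
  qed
  show ?thesis unfolding m_part_def X cV mx_Max ..
qed

lemma wt_bij:
  assumes "finite V"
  shows "bij_betw wt (permutations_of_set V) (weightings V)"
proof (rule bij_betwI')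
  fix xs ys assume xs: "xs \<in> permutations_of_set V" and ys: "ys \<in> permutations_of_set V"
  have dx: "distinct xs" "set xs = V" and dy: "distinct ys" "set ys = V" using xs ys permutations_of_setD by auto
  have len: "length xs = length ys" using dx dy by (metis distinct_card)
  show "(wt xs = wt ys) = (xs = ys)"
  proof
    assume eq: "wt xs = wt ys"
    show "xs = ys"
    proof (rule nth_equalityI[OF len])
      fix k assume k: "k < length xs"
      have "xs ! k \<in> set ys" using dx dy k by auto
      then obtain k' where k': "k' < length ys" "ys ! k' = xs ! k" by (metis in_set_conv_nth)
      have "wt ys (ys ! k') = - (int k' + 1)" using wt_nth[OF dy(1) k'(1)] .
      moreover have "wt xs (xs ! k) = - (int k + 1)" using wt_nth[OF dx(1) k] .
      ultimately have "k = k'" using eq k' by simp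
      then show "xs ! k = ys ! k" using k' by simp
    qed
  qed simp
next
  fix xs assume xs: "xs \<in> permutations_of_set V"
  have d: "distinct xs" "set xs = V" using xs permutations_of_setD by auto
  have cV: "card V = length xs" using d distinct_card by blast
  have "bij_betw (wt xs) V {- int (card V) .. -1}"
  proof (rule bij_betw_imageI)
    show "inj_on (wt xs) V"
    proof
      fix u v assume "u \<in> V" "v \<in> V" "wt xs u = wt xs v"
      then obtain i j where "i < length xs" "j < length xs" "xs ! i = u" "xs ! j = v"
        using d by (metis in_set_conv_nth)
      then show "u = v" using wt_nth[OF d(1)] \<open>wt xs u = wt xs v\<close> by auto
    qed
    show "wt xs ` V = {- int (card V) .. -1}"
    proof
      show "wt xs ` V \<subseteq> {- int (card V) .. -1}"
      proof
        fix y assume "y \<in> wt xs ` V"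
        then obtain i where "i < length xs" "y = wt xs (xs ! i)" using d by (metis imageE in_set_conv_nth)
        then show "y \<in> {- int (card V) .. -1}" using wt_nth[OF d(1)] cV by auto
      qed
      show "{- int (card V) .. -1} \<subseteq> wt xs ` V"
      proof
        fix y assume y: "y \<in> {- int (card V) .. -1}"
        define i where "i = nat (- y - 1)"
        have i: "i < length xs" "y = - (int i + 1)" using y cV by (auto simp: i_def)
        then have "y = wt xs (xs ! i)" using wt_nth[OF d(1)] by simp
        moreover have "xs ! i \<in> V" using i d by auto
        ultimately show "y \<in> wt xs ` V" by blast
      qed
    qed
  qed
  moreover have "\<forall>v. v \<notin> V \<longrightarrow> wt xs v = 0" using wt_notin d by auto
  ultimately show "wt xs \<in> weightings V" unfolding weightings_def by simp
next
  fix w assume w: "w \<in> weightings V"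
  then have bw: "bij_betw w V {- int (card V) .. -1}" and w0: "\<forall>v. v \<notin> V \<longrightarrow> w v = 0"
    unfolding weightings_def by auto
  define xs where "xs = map (\<lambda>k. inv_into V w (- (int k + 1))) [0..<card V]"
  have len: "length xs = card V" by (simp add: xs_def)
  have nth: "xs ! k \<in> V \<and> w (xs ! k) = - (int k + 1)" if "k < card V" for k
  proof -
    have "- (int k + 1) \<in> {- int (card V) .. -1}" using that by auto
    then show ?thesis using that bw unfolding xs_def
      by (auto simp: bij_betw_def inv_into_into f_inv_into_f)
  qed
  have dist: "distinct xs"
    unfolding distinct_conv_nth len
  proof (intro allI impI)
    fix i j assume "i < card V" "j < card V" "i \<noteq> j"
    then show "xs ! i \<noteq> xs ! j" using nth[of i] nth[of j] by auto
  qed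
  have sub: "set xs \<subseteq> V" using nth len by (auto simp: in_set_conv_nth)
  have setx: "set xs = V"
    using card_subset_eq[OF assms sub] distinct_card[OF dist] len by simp
  have xsp: "xs \<in> permutations_of_set V" using dist setx by auto
  have "wt xs = w"
  proof
    fix v show "wt xs v = w v"
    proof (cases "v \<in> V")
      case True
      then obtain k where "k < length xs" "xs ! k = v" using setx by (metis in_set_conv_nth)
      then show ?thesis using wt_nth[OF dist] nth len by auto
    next
      case False then show ?thesis using w0 wt_notin setx by auto
    qed
  qed
  then show "\<exists>xs\<in>permutations_of_set V. w = wt xs" using xsp by auto
qed



lemma binom_step:
  assumes "a \<le> k" "a + b = n"
  shows "a * (n choose Suc k) \<le> b * (n choose k)"
proof -
  have "a * (n choose Suc k) \<le> Suc k * (n choose Suc k)" using assms by (intro mult_right_mono) auto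
  also have "\<dots> = (n - k) * (n choose k)" using binomial_absorption binomial_absorb_comp by metis
  also have "\<dots> \<le> b * (n choose k)" using assms by (intro mult_right_mono) auto
  finally show ?thesis .
qed

lemma binom_geom:
  assumes "b < a"
  shows "real ((a+b) choose (a+j)) \<le> real ((a+b) choose a) * (real b / real a) ^ j"
proof (induction j)
  case 0 then show ?case by simp
next
  case (Suc j)
  have apos: "real a > 0" using assms by simp
  have "real a * real ((a+b) choose Suc (a+j)) \<le> real b * real ((a+b) choose (a+j))"
    using binom_step[of a "a+j" b "a+b"] by (simp flip: of_nat_mult)
  then have "real ((a+b) choose (a + Suc j)) \<le> (real b / real a) * real ((a+b) choose (a+j))"
    using apos by (simp add: field_simps)
  also have "\<dots> \<le> (real b / real a) * (real ((a+b) choose a) * (real b / real a) ^ j)"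
    by (intro mult_left_mono Suc.IH) auto
  finally show ?case by (simp add: algebra_simps)
qed

lemma geom_sum_le:
  fixes r :: real
  assumes "0 \<le> r" "r < 1"
  shows "(\<Sum>j=1..M. r ^ j) \<le> r / (1 - r)"
proof -
  have "(1 - r) * (\<Sum>j=1..M. r ^ j) = r - r ^ Suc M"
  proof (induction M)
    case 0 then show ?case by simp
  next
    case (Suc M)
    have "(1 - r) * (\<Sum>j=1..Suc M. r ^ j) = (1 - r) * (\<Sum>j=1..M. r ^ j) + (1 - r) * r ^ Suc M"
      by (simp add: distrib_left)
    also have "\<dots> = r - r ^ Suc M + (1 - r) * r ^ Suc M" using Suc.IH by simp
    also have "\<dots> = r - r ^ Suc (Suc M)" by (simp add: algebra_simps)
    finally show ?case .
  qed
  then have "(1 - r) * (\<Sum>j=1..M. r ^ j) \<le> r" using assms by simp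
  then show ?thesis using assms by (simp add: field_simps mult.commute)
qed

lemma sum_g_bound:
  assumes "b < a"
  shows "real (\<Sum>k=1..a+b. g a b (int k)) \<le> real ((a+b) choose a) * (real (a - b) + real b / (real a - real b))"
proof -
  let ?C = "real ((a+b) choose a)"
  let ?d = "a - b"
  let ?r = "real b / real a"
  have split: "{1..a+b} = {1..?d} \<union> {?d+1..?d + 2*b}" using assms by auto
  have "(\<Sum>k=1..a+b. g a b (int k)) = (\<Sum>k=1..?d. g a b (int k)) + (\<Sum>k=?d+1..?d+2*b. g a b (int k))"
    unfolding split by (rule sum.union_disjoint) auto
  also have "(\<Sum>k=1..?d. g a b (int k)) = ?d * ((a+b) choose a)"
    by (subst sum.cong[OF refl, where h="\<lambda>_. (a+b) choose a"]) (auto simp: g_closed)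
  also have "(\<Sum>k=?d+1..?d+2*b. g a b (int k)) = (\<Sum>j=1..2*b. (a+b) choose (a+j))"
  proof -
    have "(\<Sum>k=?d+1..?d+2*b. g a b (int k)) = (\<Sum>j=1..2*b. g a b (int (j + ?d)))"
      using sum.shift_bounds_cl_nat_ivl[of "\<lambda>k. g a b (int k)" 1 ?d "2*b"] by (simp add: add.commute)
    also have "\<dots> = (\<Sum>j=1..2*b. (a+b) choose (a+j))"
    proof (rule sum.cong[OF refl])
      fix j assume j: "j \<in> {1..2*b}"
      have "nat (int b + int (j + (a - b))) = a + j" using assms by auto
      then show "g a b (int (j + ?d)) = (a+b) choose (a+j)" using j assms by (simp add: g_closed)
    qed
    finally show ?thesis .
  qed
  finally have eq: "real (\<Sum>k=1..a+b. g a b (int k)) = real ?d * ?C + (\<Sum>j=1..2*b. real ((a+b) choose (a+j)))"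
    by simp
  have "(\<Sum>j=1..2*b. real ((a+b) choose (a+j))) \<le> (\<Sum>j=1..2*b. ?C * ?r ^ j)"
    by (intro sum_mono binom_geom assms)
  also have "\<dots> = ?C * (\<Sum>j=1..2*b. ?r ^ j)" by (simp add: sum_distrib_left)
  also have "\<dots> \<le> ?C * (?r / (1 - ?r))"
    using assms by (intro mult_left_mono geom_sum_le) auto
  also have "?r / (1 - ?r) = real b / (real a - real b)"
    using assms by (simp add: field_simps)
  finally show ?thesis unfolding eq using assms by (simp add: algebra_simps)
qed



lemma mx_le: "mx S xs \<le> int (length xs)"
  by (induction xs) auto

lemma sum_ind: "finite A \<Longrightarrow> (\<Sum>x\<in>A. if P x then 1 else 0 :: nat) = card {x\<in>A. P x}"
  by (simp add: sum.If_cases Int_def)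

lemma ind_sum:
  fixes m :: int
  assumes "0 \<le> m" "m \<le> int n"
  shows "m = int (\<Sum>k=1..n. if int k \<le> m then 1 else 0)"
proof -
  have "{k \<in> {1..n}. int k \<le> m} = {1..nat m}" using assms by auto
  then show ?thesis using assms by (simp add: sum_ind)
qed

lemma expected_formula:
  assumes "finite V" "Vi \<subseteq> V"
  shows "expected_m V Vi = real (\<Sum>k=1..card V. g (card Vi) (card (V - Vi)) (int k)) / real (card V choose card Vi)"
proof -
  let ?S = "\<lambda>v. v \<in> Vi"
  let ?P = "permutations_of_set V"
  let ?n = "card V" let ?a = "card Vi" let ?b = "card (V - Vi)"
  have cV: "?n = ?a + ?b" using assms by (metis card_Diff_subset card_mono diff_add_inverse finite_subset le_add_diff_inverse)
  have UV: "Vi \<union> (V - Vi) = V" using assms by auto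
  have bij: "bij_betw wt ?P (weightings V)" by (rule wt_bij[OF assms(1)])
  have cw: "card (weightings V) = fact ?n"
    using bij_betw_same_card[OF bij] assms by simp
  have "(\<Sum>w\<in>weightings V. real_of_int (m_part V Vi w)) = (\<Sum>xs\<in>?P. real_of_int (m_part V Vi (wt xs)))"
    by (rule sum.reindex_bij_betw[OF bij, symmetric])
  also have "\<dots> = (\<Sum>xs\<in>?P. real_of_int (mx ?S xs))"
    by (intro sum.cong refl) (simp add: m_part_wt assms)
  also have "\<dots> = (\<Sum>xs\<in>?P. real (\<Sum>k=1..?n. if int k \<le> mx ?S xs then 1 else 0))"
  proof (intro sum.cong refl)
    fix xs assume "xs \<in> ?P"
    then have "length xs = ?n" by (simp add: length_finite_permutations_of_set)
    then have "mx ?S xs = int (\<Sum>k=1..?n. if int k \<le> mx ?S xs then 1 else 0)"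
    proof -
      have "mx ?S xs \<le> int ?n" using mx_le[of ?S xs] \<open>length xs = ?n\<close> by simp
      then show ?thesis by (rule ind_sum[OF mx_nonneg])
    qed
    then show "real_of_int (mx ?S xs) = real (\<Sum>k=1..?n. if int k \<le> mx ?S xs then 1 else 0)"
      by (metis of_int_of_nat_eq)
  qed
  also have "\<dots> = real (\<Sum>k=1..?n. \<Sum>xs\<in>?P. if int k \<le> mx ?S xs then 1 else 0)"
    by (simp only: of_nat_sum[symmetric] sum.swap[of _ "{1..?n}"])
  also have "\<dots> = real (\<Sum>k=1..?n. card {xs \<in> ?P. int k \<le> mx ?S xs})"
    by (simp add: sum_ind)
  also have "\<dots> = real (\<Sum>k=1..?n. fact ?a * fact ?b * g ?a ?b (int k))"
    using count_mx[of Vi "V - Vi" ?S] assms UV by (simp add: finite_subset)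
  also have "\<dots> = real (fact ?a * fact ?b) * real (\<Sum>k=1..?n. g ?a ?b (int k))"
    by (simp add: sum_distrib_left)
  finally have num: "(\<Sum>w\<in>weightings V. real_of_int (m_part V Vi w)) = real (fact ?a * fact ?b) * real (\<Sum>k=1..?n. g ?a ?b (int k))" .
  have den: "real (card (weightings V)) = real (fact ?a * fact ?b) * real (?n choose ?a)"
  proof -
    have "card (weightings V) = fact ?a * fact ?b * (?n choose ?a)"
      unfolding cw using binomial_fact_lemma[of ?a ?n] cV by (simp add: algebra_simps)
    then show ?thesis by (simp only: of_nat_mult)
  qed
  have pos: "real (fact ?a * fact ?b) > 0" by simp
  show ?thesis unfolding expected_m_def num den using pos by simp
qed



theorem mainTheorem7:
  fixes k n i :: nat and c :: "nat \<Rightarrow> real" and V :: "'a set" and P :: "nat \<Rightarrow> 'a set"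
  assumes "k \<ge> 3"
    and "\<forall>j\<in>{1..<k}. c j \<ge> c (Suc j)"
    and "\<forall>j\<in>{1..k}. c j > 0"
    and "(\<Sum>j=1..k. c j) = 1"
    and "\<forall>j\<in>{1..k}. c j * real n \<in> \<int>"
    and "finite V" and "card V = n"
    and "\<forall>j\<in>{1..k}. P j \<subseteq> V"
    and "\<forall>j\<in>{1..k}. \<forall>l\<in>{1..k}. j \<noteq> l \<longrightarrow> P j \<inter> P l = {}"
    and "(\<Union>j\<in>{1..k}. P j) = V"
    and "\<forall>j\<in>{1..k}. real (card (P j)) = c j * real n"
    and "i \<in> {1..k}"
    and "c i > 1/2"
  shows "expected_m V (P i) \<le> 2 * c i * real n - real n + 2 * (1 - c i) / (2 * c i - 1)"
proof -
  let ?Vi = "P i"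
  let ?a = "card ?Vi" let ?b = "card (V - ?Vi)"
  have sub: "?Vi \<subseteq> V" using assms(8,12) by auto
  have cV: "n = ?a + ?b" using sub assms(6,7)
    by (metis card_Diff_subset card_mono diff_add_inverse finite_subset le_add_diff_inverse)
  have ra: "real ?a = c i * real n" using assms(11,12) by auto
  have c1: "c i \<le> 1"
  proof -
    have "c i \<le> (\<Sum>j=1..k. c j)"
      using assms(3,12) by (intro member_le_sum) (auto simp: less_imp_le)
    then show ?thesis using assms(4) by simp
  qed
  have nn: "0 \<le> 2 * (1 - c i) / (2 * c i - 1)" using c1 assms(13) by simp
  have E: "expected_m V ?Vi = real (\<Sum>k=1..n. g ?a ?b (int k)) / real (n choose ?a)"
    using expected_formula[OF assms(6) sub] assms(7) by simp
  show ?thesis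
  proof (cases "n = 0")
    case True
    then show ?thesis using E nn by simp
  next
    case False
    then have npos: "real n > 0" by simp
    have rb: "real ?b = real n - c i * real n" using cV ra by simp
    have ab: "?b < ?a"
    proof -
      have "c i * real n > real n / 2" using assms(13) npos by (simp add: field_simps)
      then have "real ?b < real ?a" using ra rb by linarith
      then show ?thesis by simp
    qed
    have Cpos: "real (n choose ?a) > 0" using cV by simp
    have "real (\<Sum>k=1..n. g ?a ?b (int k)) \<le> real (n choose ?a) * (real (?a - ?b) + real ?b / (real ?a - real ?b))"
      using sum_g_bound[OF ab] cV by simp
    then have E2: "expected_m V ?Vi \<le> real (?a - ?b) + real ?b / (real ?a - real ?b)"
      unfolding E using Cpos by (simp add: divide_le_eq mult.commute)
    have d: "real (?a - ?b) = 2 * c i * real n - real n" using ab ra rb by (simp add: of_nat_diff)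
    have "real ?b / (real ?a - real ?b) = (1 - c i) / (2 * c i - 1)"
    proof -
      have "real ?b / (real ?a - real ?b) = ((1 - c i) * real n) / ((2 * c i - 1) * real n)"
      proof -
        have "real ?a - real ?b = (2 * c i - 1) * real n" using ra rb by (simp add: algebra_simps)
        moreover have "real ?b = (1 - c i) * real n" using rb by (simp add: algebra_simps)
        ultimately show ?thesis by simp
      qed
      also have "\<dots> = (1 - c i) / (2 * c i - 1)" using npos by simp
      finally show ?thesis .
    qed
    moreover have "(1 - c i) / (2 * c i - 1) \<le> 2 * (1 - c i) / (2 * c i - 1)"
      using c1 assms(13) by (simp add: divide_right_mono)
    ultimately show ?thesis using E2 d by linarith
  qed
qed


end
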